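(* Let $T\in M_n(\mathbb C)$ be a nilpotent matrix such that $\|T\|=\|T^{n-1}\|=1$. Then $T$ is unitarily similar to $S$, i.e. there is a unitary $U$ with $T=USU^*$.
   Context: $S$ denotes the $n\times n$ nilpotent Jordan block with ones on the superdiagonal and zeros elsewhere. $\|\cdot\|$ is the operator norm on $M_n(\mathbb C)$ induced by the Euclidean norm on $\mathbb C^n$. *)

theory Defs
  imports "HOL-Analysis.Analysis"
begin

text \<open>n x n complex matrices are complex^'n^'n with n = CARD('n); the index type is
  well-ordered so that the superdiagonal makes sense: the position of index i is
  the number of indices strictly below i.\<close>

definition idx_pos :: "'n::{finite,wellorder} \<Rightarrow> nat" where
  "idx_pos i = card {k. k < i}"

text \<open>S: nilpotent Jordan block, ones on the superdiagonal (entry (i,i+1)).\<close>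
definition shift_mat :: "complex^('n::{finite,wellorder})^('n::{finite,wellorder})" where
  "shift_mat = (\<chi> (i::'n::{finite,wellorder}) (j::'n::{finite,wellorder}). if idx_pos j = idx_pos i + 1 then 1 else 0)"

primrec mat_pow :: "('a::semiring_1)^('n::finite)^'n \<Rightarrow> nat \<Rightarrow> 'a^'n^'n" where
  "mat_pow A 0 = mat 1"
| "mat_pow A (Suc k) = A ** mat_pow A k"

definition nilpotent_mat :: "('a::semiring_1)^('n::finite)^'n \<Rightarrow> bool" where
  "nilpotent_mat A \<longleftrightarrow> (\<exists>k. mat_pow A k = 0)"

definition adjoint_mat :: "complex^('n::finite)^'n \<Rightarrow> complex^'n^'n" where
  "adjoint_mat A = (\<chi> i j. cnj (A $ j $ i))"

definition unitary_mat :: "complex^('n::finite)^'n \<Rightarrow> bool" where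
  "unitary_mat U \<longleftrightarrow> U ** adjoint_mat U = mat 1 \<and> adjoint_mat U ** U = mat 1"

definition op_norm :: "complex^('n::finite)^'n \<Rightarrow> real" where
  "op_norm A = onorm (\<lambda>x. A *v x)"

end

theory Submission
  imports Defs
begin


lemma mat_pow_add: "mat_pow (T::'a::comm_ring_1^'n^'n) (a + b) = mat_pow T a ** mat_pow T b"
  by (induction a) (simp_all add: matrix_mul_assoc)

lemma mat_pow_Suc': "mat_pow (T::'a::comm_ring_1^'n^'n) (Suc k) = mat_pow T k ** T"
  using mat_pow_add[of T k 1] by simp

lemma nil_bound:
  fixes T :: "complex^('n::finite)^'n"
  assumes "nilpotent_mat T"
  shows "mat_pow T CARD('n) *v y = 0"
proof -
  obtain K where K: "mat_pow T K = 0" using assms unfolding nilpotent_mat_def by blast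
  define R where "R k = range ((*v) (mat_pow T k))" for k
  have sub: "vec.subspace (R k)" for k
    unfolding R_def by (rule vec.subspace_image) (rule vec.subspace_UNIV)
  have le: "R (Suc k) \<subseteq> R k" for k
    unfolding R_def mat_pow_Suc' by (auto simp: matrix_vector_mul_assoc[symmetric])
  have img: "R (Suc k) = (*v) T ` R k" for k
    unfolding R_def by (auto simp: matrix_vector_mul_assoc image_image)
  have stab: "R (k + j) = R k" if "R (Suc k) = R k" for k j
  proof (induction j)
    case (Suc j)
    have "R (k + Suc j) = (*v) T ` R (k + j)" using img[of "k+j"] by simp
    also have "\<dots> = (*v) T ` R k" using Suc by simp
    also have "\<dots> = R k" using img[of k] that by simp
    finally show ?case .
  qed simp
  have zero: "R (K + j) = {0}" for j
    unfolding R_def by (simp add: mat_pow_add K ac_simps)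
  have stab0: "R k = {0}" if "R (Suc k) = R k" for k
    using stab[OF that, of K] zero[of k] by (simp add: add.commute)
  have claim: "R k = {0} \<or> vec.dim (R k) + k \<le> CARD('n)" for k
  proof (induction k)
    case 0
    show ?case by (simp add: R_def card_cart_basis)
  next
    case (Suc k)
    show ?case
    proof (cases "R k = {0}")
      case True
      then show ?thesis using le[of k] vec.subspace_0[OF sub[of "Suc k"]] by auto
    next
      case False
      with Suc have h: "vec.dim (R k) + k \<le> CARD('n)" by simp
      have "R (Suc k) \<noteq> R k" using stab0 False by blast
      with le[of k] have "R (Suc k) \<subset> R k" by blast
      then have "vec.span (R (Suc k)) \<subset> vec.span (R k)"
        using sub by (simp add: vec.span_eq_iff[THEN iffD2])
      then have "vec.dim (R (Suc k)) < vec.dim (R k)" by (rule vec.dim_psubset)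
      with h show ?thesis by simp
    qed
  qed
  have "R CARD('n) \<subseteq> {0}" using claim[of "CARD('n)"] by auto
  then show ?thesis unfolding R_def by auto
qed



lemma real_aux:
  fixes d c :: real
  assumes "\<And>t. 2*t*d \<le> t^2*c" "c \<ge> 0"
  shows "d = 0"
proof (rule ccontr)
  assume "d \<noteq> 0"
  define t where "t = d/(c+1)"
  have c1: "c + 1 > 0" using assms(2) by simp
  have td: "t*d = d^2/(c+1)" by (simp add: t_def power2_eq_square)
  have tdpos: "t*d > 0" using td c1 \<open>d \<noteq> 0\<close> by simp
  have "t^2*c = (t*d) * (c/(c+1))" by (simp add: t_def power2_eq_square field_simps)
  also have "\<dots> \<le> (t*d) * 1"
    using tdpos c1 by (intro mult_left_mono) auto
  also have "\<dots> = t*d" by simp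
  finally have "t^2*c \<le> t*d" .
  moreover have "2*t*d \<le> t^2*c" using assms(1)[of t] .
  ultimately have "2*(t*d) \<le> t*d" by (simp only: mult.assoc)
  then show False using tdpos by (simp add: mult.commute)
qed

lemma preserve_inner:
  fixes f :: "'a::real_inner \<Rightarrow> 'b::real_inner"
  assumes lin: "linear f" and bd: "\<And>y. norm (f y) \<le> norm y" and eq: "norm (f v) = norm v"
  shows "inner (f v) (f w) = inner v w"
proof -
  interpret linear f by fact
  have "2*t*(inner (f v) (f w) - inner v w) \<le> t^2 * inner w w" for t :: real
  proof -
    have "(norm (f (v + t *\<^sub>R w)))^2 \<le> (norm (v + t *\<^sub>R w))^2"
      using bd norm_ge_zero power_mono by blast
    then have "inner (f v + t *\<^sub>R f w) (f v + t *\<^sub>R f w) \<le> inner (v + t *\<^sub>R w) (v + t *\<^sub>R w)"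
      by (simp add: power2_norm_eq_inner add scale)
    then have h: "inner (f v) (f v) + 2*t*inner (f v) (f w) + t^2 * inner (f w) (f w)
        \<le> inner v v + 2*t*inner v w + t^2*inner w w"
      by (simp add: inner_add inner_commute power2_eq_square algebra_simps)
    have h2: "inner (f v) (f v) = inner v v" using eq by (simp add: power2_norm_eq_inner[symmetric])
    have h3: "t^2 * inner (f w) (f w) \<ge> 0" by simp
    have "2*t*(inner (f v) (f w) - inner v w) = 2*t*inner (f v) (f w) - 2*t*inner v w"
      by (simp add: algebra_simps)
    then show ?thesis using h h2 h3 by linarith
  qed
  then show ?thesis using real_aux[of "inner (f v) (f w) - inner v w" "inner w w"] by simp
qed

definition herm :: "complex^'n \<Rightarrow> complex^'n \<Rightarrow> complex" where
  "herm x y = (\<Sum>r\<in>UNIV. x$r * cnj (y$r))"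

lemma Re_herm: "Re (herm x y) = inner x y"
  by (simp add: herm_def inner_vec_def inner_complex_def)

lemma Im_herm: "Im (herm x y) = inner x (\<i> *s y)"
  by (simp add: herm_def inner_vec_def inner_complex_def)

lemma herm_preserve:
  fixes T :: "complex^'n^'n"
  assumes bd: "\<And>y. norm (T *v y) \<le> norm y" and eq: "norm (T *v v) = norm v"
  shows "herm (T *v v) (T *v w) = herm v w"
proof -
  have lin: "linear ((*v) T)" by simp
  have "inner (T *v v) (T *v w) = inner v w"
    using preserve_inner[OF lin bd eq] .
  moreover have "inner (T *v v) (T *v (\<i> *s w)) = inner v (\<i> *s w)"
    using preserve_inner[OF lin bd eq] .
  ultimately show ?thesis
    by (simp add: complex_eq_iff Re_herm Im_herm vector_scalar_commute)
qed

lemma herm_self: "herm x x = of_real ((norm x)^2)"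
proof -
  have "Im (herm x x) = 0" by (simp add: herm_def)
  moreover have "Re (herm x x) = (norm x)^2" by (simp add: Re_herm power2_norm_eq_inner)
  ultimately show ?thesis by (simp add: complex_eq_iff)
qed

lemma herm_zero: "herm x 0 = 0" by (simp add: herm_def)
lemma herm_cnj: "herm y x = cnj (herm x y)" by (simp add: herm_def mult.commute)

lemma attain:
  fixes A :: "complex^'n^'n"
  shows "\<exists>x. norm x = 1 \<and> norm (A *v x) = op_norm A"
proof -
  have "\<exists>x\<in>sphere 0 1. \<forall>y\<in>sphere 0 1. norm (A *v y) \<le> norm (A *v x)"
    by (rule continuous_attains_sup)
      (auto intro!: continuous_on_norm[OF linear_continuous_on[OF matrix_vector_mul_bounded_linear]])
  then obtain x where x: "norm x = 1" "\<And>y. norm y = 1 \<Longrightarrow> norm (A *v y) \<le> norm (A *v x)"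
    by auto
  have "norm (A *v y) \<le> norm (A *v x) * norm y" for y
  proof (cases "y = 0")
    case False
    have "norm (A *v (inverse (norm y) *\<^sub>R y)) \<le> norm (A *v x)"
      using x(2) False by simp
    then show ?thesis using False
      by (simp add: vec.scale[symmetric] linear_cmul[OF matrix_vector_mul_linear] field_simps)
  qed simp
  then have "op_norm A \<le> norm (A *v x)" unfolding op_norm_def by (rule onorm_le)
  moreover have "norm (A *v x) \<le> op_norm A"
    using onorm[OF matrix_vector_mul_bounded_linear, of A x] x(1) by (simp add: op_norm_def)
  ultimately show ?thesis using x(1) by auto
qed



lemma idx_pos_mono: "(i::'n::{finite,wellorder}) < j \<Longrightarrow> idx_pos i < idx_pos j"
  unfolding idx_pos_def by (rule psubset_card_mono) auto

lemma idx_pos_inj: "idx_pos (i::'n::{finite,wellorder}) = idx_pos j \<longleftrightarrow> i = j"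
  by (metis idx_pos_mono less_irrefl neqE)

lemma idx_pos_lt: "idx_pos (i::'n::{finite,wellorder}) < CARD('n)"
  unfolding idx_pos_def by (rule psubset_card_mono) auto

lemma idx_pos_surj:
  assumes "p < CARD('n::{finite,wellorder})"
  shows "\<exists>i::'n. idx_pos i = p"
proof -
  have inj: "inj (idx_pos :: 'n \<Rightarrow> nat)" by (simp add: inj_on_def idx_pos_inj)
  have "idx_pos ` (UNIV::'n set) \<subseteq> {..<CARD('n)}" using idx_pos_lt by auto
  moreover have "card (idx_pos ` (UNIV::'n set)) = card {..<CARD('n)}"
    using card_image[OF inj] by simp
  ultimately have "idx_pos ` (UNIV::'n set) = {..<CARD('n)}"
    by (intro card_subset_eq) auto
  then show ?thesis using assms by (metis imageE lessThan_iff)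
qed




theorem lemma2p1:
  fixes T :: "complex^('n::{finite,wellorder})^('n::{finite,wellorder})"
  assumes "nilpotent_mat T"
    and "op_norm T = 1"
    and "op_norm (mat_pow T (CARD('n) - 1)) = 1"
  shows "\<exists>U. unitary_mat U \<and> T = U ** shift_mat ** adjoint_mat U"
proof -
  define N where "N = CARD('n)"
  obtain x where x: "norm x = 1" "norm (mat_pow T (N - 1) *v x) = 1"
    using attain[of "mat_pow T (N - 1)"] assms(3) unfolding N_def by auto
  define v where "v k = mat_pow T k *v x" for k
  have bd: "norm (T *v y) \<le> norm y" for y
    using onorm[OF matrix_vector_mul_bounded_linear, of T y] assms(2)
    by (simp add: op_norm_def)
  have bdk: "norm (mat_pow T k *v y) \<le> norm y" for k y
  proof (induction k)
    case (Suc k)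
    then show ?case using bd[of "mat_pow T k *v y"]
      by (simp add: matrix_vector_mul_assoc[symmetric])
  qed simp
  have vSuc: "v (Suc k) = T *v v k" for k
    by (simp add: v_def matrix_vector_mul_assoc)
  have vadd: "v (a + k) = mat_pow T a *v v k" for a k
    by (simp add: v_def mat_pow_add matrix_vector_mul_assoc)
  have vzero: "v k = 0" if "k \<ge> N" for k
  proof -
    have "v k = v ((k - N) + N)" using that by simp
    also have "\<dots> = mat_pow T (k - N) *v (mat_pow T N *v x)" by (simp only: vadd) (simp add: v_def)
    also have "\<dots> = 0" using nil_bound[OF assms(1)] by (simp add: N_def)
    finally show ?thesis .
  qed
  have vnorm: "norm (v k) = 1" if "k \<le> N - 1" for k
  proof -
    have "norm (v k) \<le> 1" using bdk[of k x] x(1) by (simp add: v_def)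
    moreover have "v (N - 1) = mat_pow T (N - 1 - k) *v v k"
    proof -
      have "N - 1 - k + k = N - 1" using that by simp
      then show ?thesis using vadd[of "N - 1 - k" k] by simp
    qed
    then have "1 \<le> norm (v k)" using bdk[of "N - 1 - k" "v k"] x(2) by (simp add: v_def)
    ultimately show ?thesis by simp
  qed
  have shift1: "herm (v (Suc i)) (v (Suc j)) = herm (v i) (v j)" if "Suc i \<le> N - 1" for i j
  proof -
    have "norm (T *v v i) = norm (v i)"
      using vnorm[of "Suc i"] vnorm[of i] that by (simp add: vSuc)
    then show ?thesis unfolding vSuc by (rule herm_preserve[OF bd])
  qed
  have shiftm: "herm (v i) (v j) = herm (v (i + m)) (v (j + m))" if "m + i \<le> N - 1" for i j m
    using that
  proof (induction m)
    case (Suc m)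
    then have "herm (v (i + m)) (v (j + m)) = herm (v (Suc (i + m))) (v (Suc (j + m)))"
      using shift1[of "i + m" "j + m"] by simp
    with Suc show ?case by simp
  qed simp
  have orth: "herm (v i) (v j) = 0" if "i < j" "i \<le> N - 1" for i j
  proof -
    have "herm (v i) (v j) = herm (v (i + (N - 1 - i))) (v (j + (N - 1 - i)))"
      using shiftm[of "N - 1 - i" i j] that by simp
    also have "v (j + (N - 1 - i)) = 0" using that by (intro vzero) simp
    finally show ?thesis by (simp add: herm_zero)
  qed
  have orthn: "herm (v i) (v j) = (if i = j then 1 else 0)" if "i \<le> N - 1" "j \<le> N - 1" for i j
  proof (cases i j rule: linorder_cases)
    case less then show ?thesis using orth that by simp
  next
    case equal then show ?thesis using vnorm that by (simp add: herm_self)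
  next
    case greater then show ?thesis using orth[of j i] that herm_cnj[of "v i" "v j"] by simp
  qed
  define u where "u p = v (N - 1 - p)" for p
  have uorth: "herm (u p) (u q) = (if p = q then 1 else 0)" if "p < N" "q < N" for p q
    using orthn[of "N - 1 - p" "N - 1 - q"] that unfolding u_def by auto
  have Tu0: "T *v u 0 = 0"
    unfolding u_def vSuc[symmetric] by (rule vzero) simp
  have Tu: "T *v u p = u (p - 1)" if "p \<ge> 1" "p < N" for p
  proof -
    have "Suc (N - 1 - p) = N - 1 - (p - 1)" using that by simp
    then show ?thesis unfolding u_def vSuc[symmetric] by simp
  qed
  define U where "U = (\<chi> r (c::'n). u (idx_pos c) $ r)"
  have UU: "adjoint_mat U ** U = mat 1"
  proof -
    have "(adjoint_mat U ** U) $ a $ b = mat 1 $ a $ b" for a b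
    proof -
      have "(adjoint_mat U ** U) $ a $ b = herm (u (idx_pos b)) (u (idx_pos a))"
        by (simp add: matrix_matrix_mult_def adjoint_mat_def U_def herm_def mult.commute)
      also have "\<dots> = (if a = b then 1 else 0)"
        using uorth idx_pos_lt[of a] idx_pos_lt[of b] idx_pos_inj[of b a]
        by (auto simp: N_def)
      finally show ?thesis by (simp add: mat_def)
    qed
    then show ?thesis by (simp add: vec_eq_iff)
  qed
  then have UU': "U ** adjoint_mat U = mat 1" by (simp add: matrix_left_right_inverse)
  have TU: "T ** U = U ** shift_mat"
  proof -
    have "(T ** U) $ r $ c = (U ** shift_mat) $ r $ c" for r c
    proof -
      have l: "(T ** U) $ r $ c = (T *v u (idx_pos c)) $ r"
        by (simp add: matrix_matrix_mult_def matrix_vector_mult_def U_def)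
      have rr: "(U ** shift_mat) $ r $ c =
          (\<Sum>k::'n\<in>UNIV. if idx_pos c = idx_pos k + 1 then u (idx_pos k) $ r else 0)"
        by (simp add: matrix_matrix_mult_def U_def shift_mat_def if_distrib cong: if_cong)
      show ?thesis
      proof (cases "idx_pos c = 0")
        case True
        then show ?thesis using l rr Tu0 by simp
      next
        case False
        have "idx_pos c - 1 < CARD('n)" using idx_pos_lt[of c] by simp
        then obtain q :: 'n where q: "idx_pos q = idx_pos c - 1"
          using idx_pos_surj by blast
        have iff: "(idx_pos c = idx_pos k + 1) = (k = q)" for k
          using q False idx_pos_inj[of k q] by auto
        have "(U ** shift_mat) $ r $ c = u (idx_pos c - 1) $ r"
          unfolding rr iff using q by simp
        then show ?thesis using l Tu[of "idx_pos c"] False idx_pos_lt[of c] by (simp add: N_def)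
      qed
    qed
    then show ?thesis by (simp add: vec_eq_iff)
  qed
  have "T = T ** (U ** adjoint_mat U)" using UU' by simp
  also have "\<dots> = U ** shift_mat ** adjoint_mat U" by (simp add: matrix_mul_assoc TU)
  finally show ?thesis using UU UU' unfolding unitary_mat_def by blast
qed

end
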